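(* Let $(R,\mathcal B)$ be a bornological $V$-algebra. The following are equivalent: (1) $\varrho(M)\le1$ for all $M\in\mathcal B$ that are $V$-submodules; (2) $\sum_{j\ge0}\pi^jM^{cj+d}$ is bounded for all bounded $M$ and all $c,d\in\mathbb N$; (3) $\sum_{j\ge0}\pi^jM^{j+1}$ is bounded for all bounded $M$; (4) every bounded subset of $R$ is contained in a bounded $V$-submodule $M$ with $\pi M^2\subseteq M$.
   Context: $V$ complete DVR with uniformizer $\pi$, $|\pi|=\epsilon\in(0,1)$. A (convex) bornology: bounded sets contain finite sets, closed under subsets, finite unions and generated $V$-submodules; a bornological algebra has bounded multiplication. Sums $\sum_j X_j$ denote the set of finite sums of elements of $\bigcup_jX_j$. For $r\ge1$ and a $V$-submodule $M$, $r^{-n}\star M^n:=\pi^{\lceil\log_\epsilon(r^{-n})\rceil}M^n$, and "$\varrho(M)\le1$" means that $\sum_{n\ge0}r^{-n}\star M^n$ is bounded for every $r>1$. *)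

theory Defs
  imports Complex_Main
begin

definition complete_dvr_unif :: "'v::idom \<Rightarrow> bool" where
  "complete_dvr_unif \<pi> \<longleftrightarrow>
     \<pi> \<noteq> 0 \<and> \<not> \<pi> dvd 1 \<and>
     (\<forall>x. x \<noteq> 0 \<longrightarrow> (\<exists>u n. u dvd 1 \<and> x = u * \<pi> ^ n)) \<and>
     (\<forall>f :: nat \<Rightarrow> 'v. (\<forall>n. \<pi> ^ n dvd (f (Suc n) - f n)) \<longrightarrow>
        (\<exists>L. \<forall>n. \<pi> ^ n dvd (L - f n)))"

definition V_algebra :: "('v::comm_ring_1 \<Rightarrow> 'r::ring_1 \<Rightarrow> 'r) \<Rightarrow> bool" where
  "V_algebra sm \<longleftrightarrow>
     (\<forall>a x y. sm a (x + y) = sm a x + sm a y) \<and>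
     (\<forall>a b x. sm (a + b) x = sm a x + sm b x) \<and>
     (\<forall>a b x. sm (a * b) x = sm a (sm b x)) \<and>
     (\<forall>x. sm 1 x = x) \<and>
     (\<forall>a x y. sm a (x * y) = sm a x * y) \<and>
     (\<forall>a x y. sm a (x * y) = x * sm a y)"

definition V_submodule :: "('v \<Rightarrow> 'r \<Rightarrow> 'r) \<Rightarrow> 'r::ring_1 set \<Rightarrow> bool" where
  "V_submodule sm M \<longleftrightarrow> 0 \<in> M \<and> (\<forall>x\<in>M. \<forall>y\<in>M. x + y \<in> M) \<and> (\<forall>a. \<forall>x\<in>M. sm a x \<in> M)"

definition V_span :: "('v \<Rightarrow> 'r \<Rightarrow> 'r) \<Rightarrow> 'r::ring_1 set \<Rightarrow> 'r set" where
  "V_span sm S = \<Inter>{M. V_submodule sm M \<and> S \<subseteq> M}"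

definition bornology :: "('v \<Rightarrow> 'r \<Rightarrow> 'r) \<Rightarrow> 'r::ring_1 set set \<Rightarrow> bool" where
  "bornology sm B \<longleftrightarrow>
     (\<forall>S. finite S \<longrightarrow> S \<in> B) \<and>
     (\<forall>S\<in>B. \<forall>T. T \<subseteq> S \<longrightarrow> T \<in> B) \<and>
     (\<forall>S\<in>B. \<forall>T\<in>B. S \<union> T \<in> B) \<and>
     (\<forall>S\<in>B. V_span sm S \<in> B)"

definition bornological_algebra :: "('v::comm_ring_1 \<Rightarrow> 'r \<Rightarrow> 'r) \<Rightarrow> 'r::ring_1 set set \<Rightarrow> bool" where
  "bornological_algebra sm B \<longleftrightarrow> V_algebra sm \<and> bornology sm B \<and>
     (\<forall>S\<in>B. \<forall>T\<in>B. {s * t | s t. s \<in> S \<and> t \<in> T} \<in> B)"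

definition setpow :: "'r::ring_1 set \<Rightarrow> nat \<Rightarrow> 'r set" where
  "setpow M n = {prod_list xs | xs. length xs = n \<and> set xs \<subseteq> M}"

definition sscale :: "('v \<Rightarrow> 'r \<Rightarrow> 'r) \<Rightarrow> 'v \<Rightarrow> 'r set \<Rightarrow> 'r set" where
  "sscale sm a S = sm a ` S"

definition fsums :: "(nat \<Rightarrow> 'r::ring_1 set) \<Rightarrow> 'r set" where
  "fsums X = {sum_list xs | xs. set xs \<subseteq> (\<Union>j. X j)}"

text \<open>r^{-n} \<star> M^n = \<pi>^(ceil(log_eps (r^{-n}))) M^n.\<close>
definition star_pow :: "('v::comm_ring_1 \<Rightarrow> 'r \<Rightarrow> 'r) \<Rightarrow> 'v \<Rightarrow> real \<Rightarrow> real \<Rightarrow> nat \<Rightarrow> 'r::ring_1 set \<Rightarrow> 'r set" where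
  "star_pow sm \<pi> eps r n M = sscale sm (\<pi> ^ nat \<lceil>log eps ((1 / r) ^ n)\<rceil>) (setpow M n)"

definition rho_le_1 :: "('v::comm_ring_1 \<Rightarrow> 'r \<Rightarrow> 'r) \<Rightarrow> 'r::ring_1 set set \<Rightarrow> 'v \<Rightarrow> real \<Rightarrow> 'r set \<Rightarrow> bool" where
  "rho_le_1 sm B \<pi> eps M \<longleftrightarrow> (\<forall>r::real. r > 1 \<longrightarrow> fsums (\<lambda>n. star_pow sm \<pi> eps r n M) \<in> B)"

end

theory Submission
  imports Defs
begin


lemma setpow_0[simp]: "setpow M 0 = {1}" by (auto simp: setpow_def)

lemma setpow_Suc: "setpow M (Suc n) = {s*t | s t. s\<in>M \<and> t \<in> setpow M n}"
proof
  show "setpow M (Suc n) \<subseteq> {s*t | s t. s\<in>M \<and> t \<in> setpow M n}"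
  proof
    fix x assume "x \<in> setpow M (Suc n)"
    then obtain xs where "x = prod_list xs" "length xs = Suc n" "set xs \<subseteq> M" by (auto simp: setpow_def)
    then obtain y ys where "xs = y # ys" by (cases xs) auto
    thus "x \<in> {s*t | s t. s\<in>M \<and> t \<in> setpow M n}" using \<open>x = prod_list xs\<close> \<open>length xs = Suc n\<close> \<open>set xs \<subseteq> M\<close>
      by (auto simp: setpow_def)
  qed
next
  show "{s*t | s t. s\<in>M \<and> t \<in> setpow M n} \<subseteq> setpow M (Suc n)"
  proof
    fix x assume "x \<in> {s*t | s t. s\<in>M \<and> t \<in> setpow M n}"
    then obtain s ys where "x = s * prod_list ys" "s \<in> M" "length ys = n" "set ys \<subseteq> M" by (auto simp: setpow_def)
    thus "x \<in> setpow M (Suc n)" unfolding setpow_def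
      by (intro CollectI exI[of _ "s#ys"]) auto
  qed
qed

lemma setpow_1: "setpow M 1 = M"
  using setpow_Suc[of M 0] by auto

lemma setpow_2: "setpow M 2 = {s*t | s t. s\<in>M \<and> t \<in> M}"
  using setpow_Suc[of M 1] by (simp add: numeral_2_eq_2 setpow_1[simplified])

lemma setpow_add_D: "x \<in> setpow M (a+b) \<Longrightarrow> \<exists>s t. x = s*t \<and> s \<in> setpow M a \<and> t \<in> setpow M b"
proof -
  assume "x \<in> setpow M (a+b)"
  then obtain xs where xs: "x = prod_list xs" "length xs = a+b" "set xs \<subseteq> M" by (auto simp: setpow_def)
  have "x = prod_list (take a xs) * prod_list (drop a xs)"
    using xs(1) by (metis append_take_drop_id prod_list.append)
  moreover have "prod_list (take a xs) \<in> setpow M a" unfolding setpow_def using xs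
    by (intro CollectI exI[of _ "take a xs"]) (auto dest: in_set_takeD)
  moreover have "prod_list (drop a xs) \<in> setpow M b" unfolding setpow_def using xs
    by (intro CollectI exI[of _ "drop a xs"]) (auto dest: in_set_dropD)
  ultimately show ?thesis by blast
qed

lemma setpow_add_I: "s \<in> setpow M a \<Longrightarrow> t \<in> setpow M b \<Longrightarrow> s*t \<in> setpow M (a+b)"
proof -
  assume "s \<in> setpow M a" "t \<in> setpow M b"
  then obtain xs ys where "s = prod_list xs" "length xs = a" "set xs \<subseteq> M"
     "t = prod_list ys" "length ys = b" "set ys \<subseteq> M" by (auto simp: setpow_def)
  thus ?thesis unfolding setpow_def by (intro CollectI exI[of _ "xs @ ys"]) auto
qed

lemma setpow_mono: "M \<subseteq> N \<Longrightarrow> setpow M n \<subseteq> setpow N n"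
  unfolding setpow_def by auto

lemma setpow_pad: "1 \<in> M \<Longrightarrow> n \<le> m \<Longrightarrow> setpow M n \<subseteq> setpow M m"
proof
  fix x assume "1 \<in> M" "n \<le> m" "x \<in> setpow M n"
  have "1 \<in> setpow M (m-n)" unfolding setpow_def using \<open>1\<in>M\<close>
    by (intro CollectI exI[of _ "replicate (m-n) 1"]) auto
  from setpow_add_I[OF \<open>x \<in> setpow M n\<close> this] \<open>n\<le>m\<close> show "x \<in> setpow M m" by simp
qed

lemma setpow_mult: "setpow M (C*j) \<subseteq> setpow (setpow M C) j"
proof (induction j)
  case 0 then show ?case by simp
next
  case (Suc j)
  show ?case
  proof
    fix x assume "x \<in> setpow M (C * Suc j)"
    then have "x \<in> setpow M (C + C*j)" by simp
    then obtain s t where "x = s*t" "s \<in> setpow M C" "t \<in> setpow M (C*j)" using setpow_add_D by blast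
    then show "x \<in> setpow (setpow M C) (Suc j)" using Suc by (auto simp: setpow_Suc)
  qed
qed



lemma Valg:
  assumes "V_algebra sm"
  shows sm_add: "sm a (x + y) = sm a x + sm a y"
    and sm_mult: "sm (a * b) x = sm a (sm b x)"
    and sm_one: "sm 1 x = x"
    and sm_mulL: "sm a (x * y) = sm a x * y"
    and sm_mulR: "sm a (x * y) = x * sm a y"
proof -
  note h = assms[unfolded V_algebra_def]
  show "sm a (x + y) = sm a x + sm a y" using h[THEN conjunct1] by blast
  show "sm (a * b) x = sm a (sm b x)" using h[THEN conjunct2, THEN conjunct2, THEN conjunct1] by blast
  show "sm 1 x = x" using h[THEN conjunct2, THEN conjunct2, THEN conjunct2, THEN conjunct1] by blast
  show "sm a (x * y) = sm a x * y" using h[THEN conjunct2, THEN conjunct2, THEN conjunct2, THEN conjunct2, THEN conjunct1] by blast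
  show "sm a (x * y) = x * sm a y" using h[THEN conjunct2, THEN conjunct2, THEN conjunct2, THEN conjunct2, THEN conjunct2] by blast
qed

lemma sm_zero: "V_algebra sm \<Longrightarrow> sm a 0 = 0"
  using sm_add[of sm a 0 0] by simp

lemma sm_sum_list: "V_algebra sm \<Longrightarrow> sm a (sum_list xs) = sum_list (map (sm a) xs)"
  by (induction xs) (simp_all add: sm_zero sm_add)

lemma sm_pow_add: "V_algebra sm \<Longrightarrow> sm ((\<pi>::'v::comm_ring_1) ^ (i+k)) x = sm (\<pi>^i) (sm (\<pi>^k) x)"
  by (simp add: power_add sm_mult)

lemma sm_pow0: "V_algebra sm \<Longrightarrow> sm ((\<pi>::'v::comm_ring_1) ^ 0) x = x"
  by (simp add: sm_one)

lemma span_sub: "S \<subseteq> V_span sm S" unfolding V_span_def by auto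

lemma span_submod: "V_submodule sm (V_span sm S)"
  unfolding V_span_def V_submodule_def by auto

lemma span_least: "V_submodule sm N \<Longrightarrow> S \<subseteq> N \<Longrightarrow> V_span sm S \<subseteq> N"
  unfolding V_span_def by auto

lemma fsums_sub: assumes "V_submodule sm N" "\<And>j. X j \<subseteq> N" shows "fsums X \<subseteq> N"
proof
  fix x assume "x \<in> fsums X"
  then obtain xs where "x = sum_list xs" "set xs \<subseteq> (\<Union>j. X j)" by (auto simp: fsums_def)
  moreover have "set xs \<subseteq> (\<Union>j. X j) \<Longrightarrow> sum_list xs \<in> N" for xs
    using assms by (induction xs) (auto simp: V_submodule_def, blast)
  ultimately show "x \<in> N" by simp
qed

lemma submod_scale: "V_submodule sm N \<Longrightarrow> x \<in> N \<Longrightarrow> sm a x \<in> N"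
  unfolding V_submodule_def by blast

definition prodset :: "'r::ring_1 set \<Rightarrow> 'r set \<Rightarrow> 'r set" where
  "prodset S T = {s * t | s t. s \<in> S \<and> t \<in> T}"

lemma bor:
  assumes "bornological_algebra sm B"
  shows bor_fin: "finite S \<Longrightarrow> S \<in> B"
    and bor_sub: "S \<in> B \<Longrightarrow> T \<subseteq> S \<Longrightarrow> T \<in> B"
    and bor_un: "S \<in> B \<Longrightarrow> T \<in> B \<Longrightarrow> S \<union> T \<in> B"
    and bor_span: "S \<in> B \<Longrightarrow> V_span sm S \<in> B"
    and bor_prod: "S \<in> B \<Longrightarrow> T \<in> B \<Longrightarrow> prodset S T \<in> B"
    and bor_alg: "V_algebra sm"
  using assms unfolding bornological_algebra_def bornology_def prodset_def by auto

lemma bor_setpow: assumes "bornological_algebra sm B" "M \<in> B" shows "setpow M n \<in> B"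
proof (induction n)
  case 0 show ?case using bor_fin[OF assms(1)] by simp
next
  case (Suc n)
  have "setpow M (Suc n) = prodset M (setpow M n)" by (simp add: setpow_Suc prodset_def)
  thus ?case using bor_prod[OF assms(1) assms(2) Suc] by simp
qed



lemma key:
  fixes \<pi> :: "'v::comm_ring_1" and sm :: "'v \<Rightarrow> 'r::ring_1 \<Rightarrow> 'r"
  assumes bA: "bornological_algebra sm B" and M: "M \<in> B"
    and P4: "\<forall>S\<in>B. \<exists>M. V_submodule sm M \<and> M \<in> B \<and> S \<subseteq> M \<and> sscale sm \<pi> (setpow M 2) \<subseteq> M"
  shows "\<exists>K\<in>B. V_submodule sm K \<and> (\<forall>j n x. n \<le> C*j \<longrightarrow> x \<in> setpow M n \<longrightarrow> sm (\<pi>^j) x \<in> K)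
            \<and> (\<forall>n x. n \<le> C \<longrightarrow> x \<in> setpow M n \<longrightarrow> x \<in> K)"
proof -
  have alg: "V_algebra sm" using bor_alg[OF bA] .
  define M1 where "M1 = M \<union> {1}"
  have M1B: "M1 \<in> B" unfolding M1_def using bor_un[OF bA M bor_fin[OF bA, of "{1}"]] by simp
  define S where "S = setpow M1 C"
  have "S \<union> {1} \<in> B" unfolding S_def using bor_un[OF bA bor_setpow[OF bA M1B] bor_fin[OF bA, of "{1}"]] by simp
  then obtain K where K: "V_submodule sm K" "K \<in> B" "S \<union> {1} \<subseteq> K" "sscale sm \<pi> (setpow K 2) \<subseteq> K"
    using P4 by blast
  have A: "\<forall>x\<in>setpow K (Suc j). sm (\<pi>^j) x \<in> K" for j
  proof (induction j)
    case 0 then show ?case using setpow_1[of K] by (simp add: sm_one[OF alg])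
  next
    case (Suc j)
    show ?case
    proof
      fix x assume "x \<in> setpow K (Suc (Suc j))"
      then obtain y z where yz: "x = y*z" "y \<in> K" "z \<in> setpow K (Suc j)" by (auto simp: setpow_Suc[of K "Suc j"])
      have "sm (\<pi>^Suc j) x = sm \<pi> (y * sm (\<pi>^j) z)"
        using sm_pow_add[OF alg, of \<pi> 1 j] yz(1) sm_mulR[OF alg] by simp
      moreover have "y * sm (\<pi>^j) z \<in> setpow K 2" using yz Suc by (auto simp: setpow_2)
      ultimately show "sm (\<pi>^Suc j) x \<in> K" using K(4) unfolding sscale_def by auto
    qed
  qed
  have Bc: "\<forall>x\<in>setpow K j. sm (\<pi>^j) x \<in> K" for j
  proof (cases j)
    case 0 then show ?thesis using K(3) by (simp add: sm_one[OF alg])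
  next
    case (Suc i)
    show ?thesis
    proof
      fix x assume "x \<in> setpow K j"
      have "sm (\<pi>^j) x = sm \<pi> (sm (\<pi>^i) x)" using sm_pow_add[OF alg, of \<pi> 1 i] Suc by simp
      thus "sm (\<pi>^j) x \<in> K" using A[of i] \<open>x \<in> setpow K j\<close> Suc submod_scale[OF K(1)] by auto
    qed
  qed
  have one: "1 \<in> M1" unfolding M1_def by simp
  have P1: "sm (\<pi>^j) x \<in> K" if "n \<le> C*j" "x \<in> setpow M n" for j n x
  proof -
    have "x \<in> setpow M1 n" using setpow_mono[of M M1 n] that M1_def by auto
    hence "x \<in> setpow M1 (C*j)" using setpow_pad[OF one that(1)] by auto
    hence "x \<in> setpow S j" using setpow_mult S_def by blast
    hence "x \<in> setpow K j" using setpow_mono[of S K j] K(3) by auto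
    thus ?thesis using Bc by blast
  qed
  have P2: "x \<in> K" if "n \<le> C" "x \<in> setpow M n" for n x
  proof -
    have "x \<in> setpow M1 n" using setpow_mono[of M M1 n] that M1_def by auto
    hence "x \<in> S" using setpow_pad[OF one that(1)] S_def by auto
    thus ?thesis using K(3) by auto
  qed
  show ?thesis using K P1 P2 by blast
qed



lemma P4_P2:
  fixes \<pi> :: "'v::comm_ring_1" and sm :: "'v \<Rightarrow> 'r::ring_1 \<Rightarrow> 'r"
  assumes bA: "bornological_algebra sm B" and M: "M \<in> B"
    and P4: "\<forall>S\<in>B. \<exists>M. V_submodule sm M \<and> M \<in> B \<and> S \<subseteq> M \<and> sscale sm \<pi> (setpow M 2) \<subseteq> M"
  shows "fsums (\<lambda>j. sscale sm (\<pi> ^ j) (setpow M (c * j + d))) \<in> B"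
proof -
  have alg: "V_algebra sm" using bor_alg[OF bA] .
  obtain K where K: "K \<in> B" "V_submodule sm K"
    "\<And>j n x. n \<le> max c d * j \<Longrightarrow> x \<in> setpow M n \<Longrightarrow> sm (\<pi>^j) x \<in> K"
    "\<And>n x. n \<le> max c d \<Longrightarrow> x \<in> setpow M n \<Longrightarrow> x \<in> K"
    using key[OF bA M P4, of "max c d"] by blast
  define Q where "Q = V_span sm (prodset K K)"
  have QB: "Q \<in> B" unfolding Q_def using bor_span[OF bA bor_prod[OF bA K(1) K(1)]] .
  have Qsub: "V_submodule sm Q" unfolding Q_def by (rule span_submod)
  have sub: "sscale sm (\<pi> ^ j) (setpow M (c * j + d)) \<subseteq> Q" for j
  proof
    fix y assume "y \<in> sscale sm (\<pi> ^ j) (setpow M (c * j + d))"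
    then obtain x where x: "y = sm (\<pi>^j) x" "x \<in> setpow M (c*j+d)" by (auto simp: sscale_def)
    then obtain a b where ab: "x = a*b" "a \<in> setpow M (c*j)" "b \<in> setpow M d" using setpow_add_D by blast
    have "c*j \<le> max c d * j" by (simp add: mult_le_mono1)
    hence "sm (\<pi>^j) a \<in> K" using K(3) ab(2) by blast
    moreover have "b \<in> K" using K(4)[OF _ ab(3)] by simp
    moreover have "y = sm (\<pi>^j) a * b" using x(1) ab(1) sm_mulL[OF alg] by simp
    ultimately have "y \<in> prodset K K" unfolding prodset_def by blast
    thus "y \<in> Q" using span_sub[of "prodset K K" sm] unfolding Q_def by blast
  qed
  have "fsums (\<lambda>j. sscale sm (\<pi> ^ j) (setpow M (c * j + d))) \<subseteq> Q"
    by (rule fsums_sub[OF Qsub sub])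
  thus ?thesis by (rule bor_sub[OF bA QB])
qed

lemma P4_P1:
  fixes \<pi> :: "'v::comm_ring_1" and sm :: "'v \<Rightarrow> 'r::ring_1 \<Rightarrow> 'r"
  assumes bA: "bornological_algebra sm B" and M: "M \<in> B"
    and P4: "\<forall>S\<in>B. \<exists>M. V_submodule sm M \<and> M \<in> B \<and> S \<subseteq> M \<and> sscale sm \<pi> (setpow M 2) \<subseteq> M"
    and eps: "0 < eps" "eps < 1"
  shows "rho_le_1 sm B \<pi> eps M"
  unfolding rho_le_1_def
proof (intro allI impI)
  fix r :: real assume r: "r > 1"
  have alg: "V_algebra sm" using bor_alg[OF bA] .
  define \<alpha> where "\<alpha> = log eps (1/r)"
  have "ln (1/r) < 0" using r by simp
  moreover have "ln eps < 0" using eps by simp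
  ultimately have apos: "\<alpha> > 0" unfolding \<alpha>_def log_def by (simp add: divide_neg_neg)
  define C where "C = nat \<lceil>1/\<alpha>\<rceil>"
  have C1: "real C * \<alpha> \<ge> 1"
  proof -
    have "1/\<alpha> \<le> real C" unfolding C_def by linarith
    thus ?thesis using apos by (simp add: field_simps)
  qed
  hence Cpos: "C > 0" using apos by (cases C) auto
  obtain K where K: "K \<in> B" "V_submodule sm K"
    "\<And>j n x. n \<le> C * j \<Longrightarrow> x \<in> setpow M n \<Longrightarrow> sm (\<pi>^j) x \<in> K"
    "\<And>n x. n \<le> C \<Longrightarrow> x \<in> setpow M n \<Longrightarrow> x \<in> K"
    using key[OF bA M P4, of C] by blast
  define Q where "Q = V_span sm (prodset K K)"
  have QB: "Q \<in> B" unfolding Q_def using bor_span[OF bA bor_prod[OF bA K(1) K(1)]] .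
  have Qsub: "V_submodule sm Q" unfolding Q_def by (rule span_submod)
  have "star_pow sm \<pi> eps r n M \<subseteq> Q" for n
  proof
    fix y assume "y \<in> star_pow sm \<pi> eps r n M"
    then obtain x where x: "y = sm (\<pi>^nat \<lceil>log eps ((1 / r) ^ n)\<rceil>) x" "x \<in> setpow M n"
      by (auto simp: star_pow_def sscale_def)
    define e where "e = nat \<lceil>log eps ((1 / r) ^ n)\<rceil>"
    define j where "j = n div C"
    define d where "d = n mod C"
    have nd: "n = C*j + d" unfolding j_def d_def by simp
    have dC: "d \<le> C" unfolding d_def using Cpos by simp
    have "log eps ((1 / r) ^ n) = real n * \<alpha>" unfolding \<alpha>_def using r by (simp add: log_nat_power)
    moreover have "real j \<le> real n * \<alpha>"
    proof -
      have "real j \<le> real j * (real C * \<alpha>)" using C1 by (simp add: mult_le_cancel_left1)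
      also have "\<dots> = real (C*j) * \<alpha>" by simp
      also have "\<dots> \<le> real n * \<alpha>" using nd apos by (intro mult_right_mono) auto
      finally show ?thesis .
    qed
    ultimately have je: "j \<le> e" unfolding e_def by linarith
    have "x \<in> setpow M (C*j + d)" using x(2) nd by simp
    then obtain a b where ab: "x = a*b" "a \<in> setpow M (C*j)" "b \<in> setpow M d" using setpow_add_D by blast
    have "sm (\<pi>^j) a \<in> K" using K(3) ab(2) by blast
    moreover have "b \<in> K" using K(4)[OF dC ab(3)] .
    ultimately have "sm (\<pi>^j) a * b \<in> prodset K K" unfolding prodset_def by blast
    hence "sm (\<pi>^j) a * b \<in> Q" using span_sub[of "prodset K K" sm] unfolding Q_def by blast
    moreover have "y = sm (\<pi>^(e-j)) (sm (\<pi>^j) a * b)"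
    proof -
      have "y = sm (\<pi>^((e-j)+j)) (a*b)" using x(1) ab(1) je e_def by simp
      also have "\<dots> = sm (\<pi>^(e-j)) (sm (\<pi>^j) (a*b))" by (rule sm_pow_add[OF alg])
      also have "\<dots> = sm (\<pi>^(e-j)) (sm (\<pi>^j) a * b)" by (simp only: sm_mulL[OF alg])
      finally show ?thesis .
    qed
    ultimately show "y \<in> Q" using submod_scale[OF Qsub] by metis
  qed
  hence "fsums (\<lambda>n. star_pow sm \<pi> eps r n M) \<subseteq> Q" by (rule fsums_sub[OF Qsub])
  thus "fsums (\<lambda>n. star_pow sm \<pi> eps r n M) \<in> B" by (rule bor_sub[OF bA QB])
qed



lemma P1_P3:
  fixes \<pi> :: "'v::comm_ring_1" and sm :: "'v \<Rightarrow> 'r::ring_1 \<Rightarrow> 'r"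
  assumes bA: "bornological_algebra sm B" and M: "M \<in> B"
    and P1: "\<forall>M\<in>B. V_submodule sm M \<longrightarrow> rho_le_1 sm B \<pi> eps M"
    and eps: "0 < eps" "eps < 1"
  shows "fsums (\<lambda>j. sscale sm (\<pi> ^ j) (setpow M (j + 1))) \<in> B"
proof -
  have alg: "V_algebra sm" using bor_alg[OF bA] .
  define N where "N = V_span sm M"
  have NB: "N \<in> B" unfolding N_def by (rule bor_span[OF bA M])
  have Nsub: "V_submodule sm N" unfolding N_def by (rule span_submod)
  have MN: "M \<subseteq> N" unfolding N_def by (rule span_sub)
  define r where "r = 1 / sqrt eps"
  have r1: "r > 1" unfolding r_def using eps by (simp add: real_sqrt_lt_1_iff)
  define F where "F = fsums (\<lambda>n. star_pow sm \<pi> eps r n N)"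
  have FB: "F \<in> B" using P1 NB Nsub r1 unfolding rho_le_1_def F_def by blast
  define Q where "Q = V_span sm (M \<union> F)"
  have QB: "Q \<in> B" unfolding Q_def by (rule bor_span[OF bA bor_un[OF bA M FB]])
  have Qsub: "V_submodule sm Q" unfolding Q_def by (rule span_submod)
  have MFQ: "M \<union> F \<subseteq> Q" unfolding Q_def by (rule span_sub)
  have hlog: "log eps ((1 / r) ^ n) = real n / 2" for n
  proof -
    have "1 / r = eps powr (1/2)" unfolding r_def using eps by (simp add: powr_half_sqrt)
    hence "log eps ((1 / r) ^ n) = real n * log eps (eps powr (1/2))"
      using eps by (simp add: log_nat_power)
    also have "log eps (eps powr (1/2)) = 1/2" using eps by (simp add: log_powr_cancel)
    finally show ?thesis by simp
  qed
  have sub: "sscale sm (\<pi> ^ j) (setpow M (j + 1)) \<subseteq> Q" for j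
  proof
    fix y assume "y \<in> sscale sm (\<pi> ^ j) (setpow M (j + 1))"
    then obtain x where x: "y = sm (\<pi>^j) x" "x \<in> setpow M (j+1)" by (auto simp: sscale_def)
    show "y \<in> Q"
    proof (cases j)
      case 0
      then have "y = x" using x(1) sm_one[OF alg] by simp
      moreover have "x \<in> M" using x(2) 0 setpow_1[of M] by simp
      ultimately show ?thesis using MFQ by blast
    next
      case (Suc i)
      define e where "e = nat \<lceil>log eps ((1 / r) ^ (j+1))\<rceil>"
      have "real (j+1) / 2 \<le> real j" using Suc by simp
      hence ej: "e \<le> j" unfolding e_def hlog by linarith
      define z where "z = sm (\<pi>^e) x"
      have "x \<in> setpow N (j+1)" using x(2) setpow_mono[OF MN] by blast
      hence "z \<in> star_pow sm \<pi> eps r (j+1) N" unfolding star_pow_def sscale_def z_def e_def by blast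
      hence "z \<in> F" unfolding F_def fsums_def
        by (intro CollectI exI[of _ "[z]"]) auto
      hence zQ: "z \<in> Q" using MFQ by blast
      have "y = sm (\<pi>^((j-e)+e)) x" using x(1) ej by simp
      also have "\<dots> = sm (\<pi>^(j-e)) z" unfolding z_def by (rule sm_pow_add[OF alg])
      finally show ?thesis using submod_scale[OF Qsub zQ] by simp
    qed
  qed
  have "fsums (\<lambda>j. sscale sm (\<pi> ^ j) (setpow M (j + 1))) \<subseteq> Q"
    by (rule fsums_sub[OF Qsub sub])
  thus ?thesis by (rule bor_sub[OF bA QB])
qed



lemma P3_P4:
  fixes \<pi> :: "'v::comm_ring_1" and sm :: "'v \<Rightarrow> 'r::ring_1 \<Rightarrow> 'r"
  assumes bA: "bornological_algebra sm B" and S: "S \<in> B"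
    and P3: "\<forall>M\<in>B. fsums (\<lambda>j. sscale sm (\<pi> ^ j) (setpow M (j + 1))) \<in> B"
  shows "\<exists>M. V_submodule sm M \<and> M \<in> B \<and> S \<subseteq> M \<and> sscale sm \<pi> (setpow M 2) \<subseteq> M"
proof -
  have alg: "V_algebra sm" using bor_alg[OF bA] .
  define N where "N = V_span sm S"
  have NB: "N \<in> B" unfolding N_def by (rule bor_span[OF bA S])
  define U where "U = (\<Union>j. sscale sm (\<pi> ^ j) (setpow N (j + 1)))"
  define K where "K = fsums (\<lambda>j. sscale sm (\<pi> ^ j) (setpow N (j + 1)))"
  have KB: "K \<in> B" unfolding K_def using P3 NB by blast
  have Kdef: "K = {sum_list xs | xs. set xs \<subseteq> U}" unfolding K_def U_def fsums_def by simp
  have Uscale: "sm a u \<in> U" if "u \<in> U" for a u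
  proof -
    obtain j p where p: "u = sm (\<pi>^j) p" "p \<in> setpow N (Suc j)" using \<open>u\<in>U\<close> unfolding U_def sscale_def by auto
    then obtain y q where yq: "p = y*q" "y \<in> N" "q \<in> setpow N j" by (auto simp: setpow_Suc[of N j])
    have "sm a y \<in> N" unfolding N_def by (rule submod_scale[OF span_submod yq(2)[unfolded N_def]])
    hence "sm a y * q \<in> setpow N (Suc j)" using yq(3) by (auto simp: setpow_Suc[of N j])
    moreover have "sm a u = sm (\<pi>^j) (sm a y * q)"
    proof -
      have "sm a u = sm (a * \<pi>^j) p" using p(1) sm_mult[OF alg] by simp
      also have "\<dots> = sm (\<pi>^j * a) p" by (simp add: mult.commute)
      also have "\<dots> = sm (\<pi>^j) (sm a p)" by (rule sm_mult[OF alg])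
      also have "\<dots> = sm (\<pi>^j) (sm a y * q)" using yq(1) sm_mulL[OF alg] by simp
      finally show ?thesis .
    qed
    ultimately show ?thesis unfolding U_def sscale_def by auto
  qed
  have Umult: "sm \<pi> (u*v) \<in> U" if "u \<in> U" "v \<in> U" for u v
  proof -
    obtain i p where p: "u = sm (\<pi>^i) p" "p \<in> setpow N (i+1)" using \<open>u\<in>U\<close> unfolding U_def sscale_def by auto
    obtain k q where q: "v = sm (\<pi>^k) q" "q \<in> setpow N (k+1)" using \<open>v\<in>U\<close> unfolding U_def sscale_def by auto
    have "p*q \<in> setpow N ((i+1)+(k+1))" by (rule setpow_add_I[OF p(2) q(2)])
    hence pq: "p*q \<in> setpow N (Suc (i+k) + 1)" by simp
    have "u*v = sm (\<pi>^i) p * sm (\<pi>^k) q" using p(1) q(1) by simp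
    also have "\<dots> = sm (\<pi>^i) (p * sm (\<pi>^k) q)" by (rule sm_mulL[OF alg, symmetric])
    also have "p * sm (\<pi>^k) q = sm (\<pi>^k) (p*q)" by (rule sm_mulR[OF alg, symmetric])
    finally have "sm \<pi> (u*v) = sm \<pi> (sm (\<pi>^i) (sm (\<pi>^k) (p*q)))" by simp
    also have "\<dots> = sm (\<pi>^(1 + (i+k))) (p*q)"
      by (simp only: sm_pow_add[OF alg] power_one_right)
    finally have e: "sm \<pi> (u*v) = sm (\<pi>^(Suc (i+k))) (p*q)" by simp
    have "sm (\<pi>^(Suc (i+k))) (p*q) \<in> sscale sm (\<pi>^(Suc (i+k))) (setpow N (Suc (i+k) + 1))"
      using pq unfolding sscale_def by (rule imageI)
    thus ?thesis unfolding U_def e by blast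
  qed
  have K0: "0 \<in> K" unfolding Kdef by (intro CollectI exI[of _ "[]"]) auto
  have Kadd: "x + y \<in> K" if xyin: "x \<in> K" "y \<in> K" for x y
  proof -
    obtain xs ys where "x = sum_list xs" "set xs \<subseteq> U" "y = sum_list ys" "set ys \<subseteq> U"
      using xyin unfolding Kdef by blast
    thus ?thesis unfolding Kdef by (intro CollectI exI[of _ "xs @ ys"]) auto
  qed
  have UK: "u \<in> K" if "u \<in> U" for u
    unfolding Kdef using that by (intro CollectI exI[of _ "[u]"]) auto
  have Kscale: "sm a x \<in> K" if xin: "x \<in> K" for a x
  proof -
    obtain xs where xs: "x = sum_list xs" "set xs \<subseteq> U" using xin unfolding Kdef by blast
    have "sm a x = sum_list (map (sm a) xs)" using xs(1) sm_sum_list[OF alg] by simp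
    moreover have "set (map (sm a) xs) \<subseteq> U" using xs(2) Uscale by auto
    ultimately show ?thesis unfolding Kdef by blast
  qed
  have Ksub: "V_submodule sm K" unfolding V_submodule_def using K0 Kadd Kscale by blast
  have SK: "S \<subseteq> K"
  proof
    fix s assume "s \<in> S"
    hence "s \<in> N" unfolding N_def using span_sub by blast
    hence "s \<in> setpow N (0+1)" using setpow_1[of N] by simp
    hence "sm (\<pi>^0) s \<in> U" unfolding U_def sscale_def by blast
    thus "s \<in> K" using UK sm_one[OF alg] by simp
  qed
  have uK: "sm \<pi> (u * sum_list ys) \<in> K" if "u \<in> U" "set ys \<subseteq> U" for u ys
    using that(2)
  proof (induction ys)
    case Nil then show ?case using K0 sm_zero[OF alg] by simp
  next
    case (Cons v ys)
    have "sm \<pi> (u * sum_list (v#ys)) = sm \<pi> (u*v) + sm \<pi> (u * sum_list ys)"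
      by (simp add: distrib_left sm_add[OF alg])
    thus ?case using Cons Kadd UK Umult[OF that(1)] by simp
  qed
  have xyK: "sm \<pi> (sum_list xs * sum_list ys) \<in> K" if "set xs \<subseteq> U" "set ys \<subseteq> U" for xs ys
    using that(1)
  proof (induction xs)
    case Nil then show ?case using K0 sm_zero[OF alg] by simp
  next
    case (Cons u xs)
    have "sm \<pi> (sum_list (u#xs) * sum_list ys) = sm \<pi> (u * sum_list ys) + sm \<pi> (sum_list xs * sum_list ys)"
      by (simp add: distrib_right sm_add[OF alg])
    thus ?case using Cons Kadd uK that(2) by simp
  qed
  have "sscale sm \<pi> (setpow K 2) \<subseteq> K"
  proof
    fix z assume "z \<in> sscale sm \<pi> (setpow K 2)"
    then obtain x y where "z = sm \<pi> (x*y)" "x \<in> K" "y \<in> K" unfolding sscale_def setpow_2 by blast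
    thus "z \<in> K" using xyK unfolding Kdef by blast
  qed
  thus ?thesis using Ksub KB SK by blast
qed


theorem mainTheorem12:
  fixes \<pi> :: "'v::idom" and eps :: real
    and sm :: "'v \<Rightarrow> 'r::ring_1 \<Rightarrow> 'r" and B :: "'r set set"
  assumes "complete_dvr_unif \<pi>"
    and "0 < eps" and "eps < 1"
    and "bornological_algebra sm B"
  defines "P1 \<equiv> (\<forall>M\<in>B. V_submodule sm M \<longrightarrow> rho_le_1 sm B \<pi> eps M)"
    and "P2 \<equiv> (\<forall>M\<in>B. \<forall>c d :: nat. fsums (\<lambda>j. sscale sm (\<pi> ^ j) (setpow M (c * j + d))) \<in> B)"
    and "P3 \<equiv> (\<forall>M\<in>B. fsums (\<lambda>j. sscale sm (\<pi> ^ j) (setpow M (j + 1))) \<in> B)"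
    and "P4 \<equiv> (\<forall>S\<in>B. \<exists>M. V_submodule sm M \<and> M \<in> B \<and> S \<subseteq> M \<and> sscale sm \<pi> (setpow M 2) \<subseteq> M)"
  shows "(P1 \<longleftrightarrow> P2) \<and> (P2 \<longleftrightarrow> P3) \<and> (P3 \<longleftrightarrow> P4)"
proof -
  note bA = assms(4)
  have p13: "P3" if "P1"
    unfolding P3_def using P1_P3[OF bA _ that[unfolded P1_def] assms(2,3)] by blast
  have p34: "P4" if "P3"
    unfolding P4_def using P3_P4[OF bA _ that[unfolded P3_def]] by blast
  have p42: "P2" if "P4"
    unfolding P2_def using P4_P2[OF bA _ that[unfolded P4_def]] by blast
  have p41: "P1" if "P4"
    unfolding P1_def using P4_P1[OF bA _ that[unfolded P4_def] assms(2,3)] by blast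
  have p23: "P3" if "P2"
  proof -
    have "\<forall>M\<in>B. fsums (\<lambda>j. sscale sm (\<pi> ^ j) (setpow M (1 * j + 1))) \<in> B"
      using that unfolding P2_def by blast
    thus ?thesis unfolding P3_def by simp
  qed
  show ?thesis using p13 p34 p42 p41 p23 by blast
qed

end
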